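(* Let $K$ be the uniform kernel, $K_\varepsilon(u)=\mathbb{I}(u<\varepsilon)$, assume $\Theta'\cap\Theta_1$ is not Lebesgue-null and that $\Theta_1\setminus\Theta'$ is a Lebesgue-null subset of $\Theta$. Define the stationary early rejection rates of ejMCMC and of OejMCMC by $$R_{ej}=1-\iiint\min\{1,\tilde\alpha[(\theta,x),\theta^*]\}\,q(\theta^*\mid\theta)\,\hat\pi_\varepsilon(\theta,x\mid y)\,dx\,d\theta^*\,d\theta,$$ $$R_{Oej}=1-\iiint\min\{1,\breve\alpha[(\theta,x),\theta^*]\}\,q(\theta^*\mid\theta)\,\pi_\varepsilon(\theta,x\mid y)\,dx\,d\theta^*\,d\theta.$$ Then $$R_{ej}-R_{Oej}\ge\int_{\Theta'\cap\Theta_1}\int_{\Theta\setminus\Theta'}\min\left\{1,\frac{\pi(\theta^* )q(\theta\mid\theta^* )}{\pi(\theta)q(\theta^*\mid\theta)}\right\}q(\theta^*\mid\theta)\,\pi_\varepsilon(\theta\mid y)\,d\theta^*\,d\theta\ \ (\ge 0).$$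
   Context: Setting: $\theta\in\Theta\subset\mathbb{R}^p$ with prior density $\pi$; data density $p(x\mid\theta)$; observed data $y$; discrepancy $\Delta(x,y)\ge0$; tolerance $\varepsilon>0$; proposal density $q(\theta^*\mid\theta)$; discrepancy-prediction function $h:\Theta\to\mathbb{R}$. ABC joint posterior $\pi_\varepsilon(\theta,x\mid y)\propto\pi(\theta)p(x\mid\theta)K_\varepsilon(\Delta(x,y))$ with marginal $\pi_\varepsilon(\theta\mid y)$; ejMCMC joint target $\hat\pi_\varepsilon(\theta,x\mid y)\propto\pi(\theta)p(x\mid\theta)\min\{K_\varepsilon(\Delta(x,y)),K_\varepsilon(h(\theta))\}$. $\Theta'=\{\theta:h(\theta)<\varepsilon\}$, $\Theta_1=\{\theta:\pi_\varepsilon(\theta\mid y)>0\}$. Early-rejection ratios: $$\breve\alpha[(\theta,x),\theta^*]=\frac{\pi(\theta^* )q(\theta\mid\theta^* )}{\pi(\theta)q(\theta^*\mid\theta)K_\varepsilon(\Delta(x,y))},\qquad \tilde\alpha[(\theta,x),\theta^*]=\frac{\pi(\theta^* )q(\theta\mid\theta^* )}{\pi(\theta)q(\theta^*\mid\theta)}\cdot\frac{K_\varepsilon(h(\theta^* ))}{\min\{K_\varepsilon(\Delta(x,y)),K_\varepsilon(h(\theta))\}}.$$ (OejMCMC rejects $\theta^*$ before simulating when a uniform $w$ exceeds $\breve\alpha$; ejMCMC when $w$ exceeds $\tilde\alpha$.) *)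

theory Defs
  imports "HOL-Analysis.Analysis"
begin

text \<open>Parameters: \<theta> :: 'a (Euclidean space, Theta a Borel subset);
  data x :: 'b (Euclidean space, Lebesgue measure);
  prior density pr on Theta; data density p x th = p(x | th);
  proposal density q ths th = q(ths | th); discrepancy D x y; prediction h.\<close>

definition Kunif :: "real \<Rightarrow> real \<Rightarrow> real" where
  "Kunif \<epsilon> u = (if u < \<epsilon> then 1 else 0)"

definition abc_norm :: "'a::euclidean_space set \<Rightarrow> ('a \<Rightarrow> real) \<Rightarrow> ('b::euclidean_space \<Rightarrow> 'a \<Rightarrow> real)
    \<Rightarrow> ('b \<Rightarrow> 'b \<Rightarrow> real) \<Rightarrow> 'b \<Rightarrow> real \<Rightarrow> real" where
  "abc_norm Th pr p D y \<epsilon> = (LINT th:Th|lborel. (LINT x|lborel. pr th * p x th * Kunif \<epsilon> (D x y)))"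

definition abc_joint :: "'a::euclidean_space set \<Rightarrow> ('a \<Rightarrow> real) \<Rightarrow> ('b::euclidean_space \<Rightarrow> 'a \<Rightarrow> real)
    \<Rightarrow> ('b \<Rightarrow> 'b \<Rightarrow> real) \<Rightarrow> 'b \<Rightarrow> real \<Rightarrow> 'a \<Rightarrow> 'b \<Rightarrow> real" where
  "abc_joint Th pr p D y \<epsilon> th x =
     indicator Th th * pr th * p x th * Kunif \<epsilon> (D x y) / abc_norm Th pr p D y \<epsilon>"

definition abc_marg :: "'a::euclidean_space set \<Rightarrow> ('a \<Rightarrow> real) \<Rightarrow> ('b::euclidean_space \<Rightarrow> 'a \<Rightarrow> real)
    \<Rightarrow> ('b \<Rightarrow> 'b \<Rightarrow> real) \<Rightarrow> 'b \<Rightarrow> real \<Rightarrow> 'a \<Rightarrow> real" where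
  "abc_marg Th pr p D y \<epsilon> th = (LINT x|lborel. abc_joint Th pr p D y \<epsilon> th x)"

definition ej_norm :: "'a::euclidean_space set \<Rightarrow> ('a \<Rightarrow> real) \<Rightarrow> ('b::euclidean_space \<Rightarrow> 'a \<Rightarrow> real)
    \<Rightarrow> ('b \<Rightarrow> 'b \<Rightarrow> real) \<Rightarrow> ('a \<Rightarrow> real) \<Rightarrow> 'b \<Rightarrow> real \<Rightarrow> real" where
  "ej_norm Th pr p D h y \<epsilon> = (LINT th:Th|lborel. (LINT x|lborel.
      pr th * p x th * min (Kunif \<epsilon> (D x y)) (Kunif \<epsilon> (h th))))"

definition ej_joint :: "'a::euclidean_space set \<Rightarrow> ('a \<Rightarrow> real) \<Rightarrow> ('b::euclidean_space \<Rightarrow> 'a \<Rightarrow> real)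
    \<Rightarrow> ('b \<Rightarrow> 'b \<Rightarrow> real) \<Rightarrow> ('a \<Rightarrow> real) \<Rightarrow> 'b \<Rightarrow> real \<Rightarrow> 'a \<Rightarrow> 'b \<Rightarrow> real" where
  "ej_joint Th pr p D h y \<epsilon> th x =
     indicator Th th * pr th * p x th * min (Kunif \<epsilon> (D x y)) (Kunif \<epsilon> (h th))
       / ej_norm Th pr p D h y \<epsilon>"

text \<open>Early-rejection ratios (x / 0 = 0 by convention; irrelevant, since
  the integrands below vanish wherever a denominator vanishes).\<close>
definition alpha_breve :: "('a \<Rightarrow> real) \<Rightarrow> ('a \<Rightarrow> 'a \<Rightarrow> real) \<Rightarrow> ('b \<Rightarrow> 'b \<Rightarrow> real)
    \<Rightarrow> 'b \<Rightarrow> real \<Rightarrow> 'a \<Rightarrow> 'b \<Rightarrow> 'a \<Rightarrow> real" where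
  "alpha_breve pr q D y \<epsilon> th x ths =
     pr ths * q th ths / (pr th * q ths th * Kunif \<epsilon> (D x y))"

definition alpha_tilde :: "('a \<Rightarrow> real) \<Rightarrow> ('a \<Rightarrow> 'a \<Rightarrow> real) \<Rightarrow> ('b \<Rightarrow> 'b \<Rightarrow> real)
    \<Rightarrow> ('a \<Rightarrow> real) \<Rightarrow> 'b \<Rightarrow> real \<Rightarrow> 'a \<Rightarrow> 'b \<Rightarrow> 'a \<Rightarrow> real" where
  "alpha_tilde pr q D h y \<epsilon> th x ths =
     (pr ths * q th ths) / (pr th * q ths th) *
     (Kunif \<epsilon> (h ths) / min (Kunif \<epsilon> (D x y)) (Kunif \<epsilon> (h th)))"

definition R_ej :: "'a::euclidean_space set \<Rightarrow> ('a \<Rightarrow> real) \<Rightarrow> ('b::euclidean_space \<Rightarrow> 'a \<Rightarrow> real)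
    \<Rightarrow> ('a \<Rightarrow> 'a \<Rightarrow> real) \<Rightarrow> ('b \<Rightarrow> 'b \<Rightarrow> real) \<Rightarrow> ('a \<Rightarrow> real) \<Rightarrow> 'b \<Rightarrow> real \<Rightarrow> real" where
  "R_ej Th pr p q D h y \<epsilon> = 1 - (LINT th:Th|lborel. (LINT ths:Th|lborel. (LINT x|lborel.
      min 1 (alpha_tilde pr q D h y \<epsilon> th x ths) * q ths th * ej_joint Th pr p D h y \<epsilon> th x)))"

definition R_Oej :: "'a::euclidean_space set \<Rightarrow> ('a \<Rightarrow> real) \<Rightarrow> ('b::euclidean_space \<Rightarrow> 'a \<Rightarrow> real)
    \<Rightarrow> ('a \<Rightarrow> 'a \<Rightarrow> real) \<Rightarrow> ('b \<Rightarrow> 'b \<Rightarrow> real) \<Rightarrow> 'b \<Rightarrow> real \<Rightarrow> real" where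
  "R_Oej Th pr p q D y \<epsilon> = 1 - (LINT th:Th|lborel. (LINT ths:Th|lborel. (LINT x|lborel.
      min 1 (alpha_breve pr q D y \<epsilon> th x ths) * q ths th * abc_joint Th pr p D y \<epsilon> th x)))"

end

theory Submission
  imports Defs
begin

lemma swapm: "(\<lambda>z. (snd z, fst z)) \<in> measurable (borel :: ('a::second_countable_topology \<times> 'b::second_countable_topology) measure) borel"
  by (intro borel_measurable_continuous_onI continuous_intros)

lemma lb2: "measurable (lborel \<Otimes>\<^sub>M lborel) N = measurable (borel \<Otimes>\<^sub>M borel) N"
  by (rule measurable_cong_sets) (auto intro: sets_pair_measure_cong)

lemma Kunif_01: "Kunif e u = 1 \<or> Kunif e u = 0"
  by (simp add: Kunif_def)

lemma Kunif_min: "min (Kunif e a) (Kunif e b) = Kunif e a * Kunif e b"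
  by (simp add: Kunif_def)

lemma Kunif_meas[measurable]: "f \<in> borel_measurable M \<Longrightarrow> (\<lambda>x. Kunif e (f x)) \<in> borel_measurable M"
  unfolding Kunif_def by measurable

theorem proposition3:
  fixes Th :: "'a::euclidean_space set"
    and pr :: "'a \<Rightarrow> real"
    and p :: "'b::euclidean_space \<Rightarrow> 'a \<Rightarrow> real"
    and q :: "'a \<Rightarrow> 'a \<Rightarrow> real"
    and D :: "'b \<Rightarrow> 'b \<Rightarrow> real"
    and h :: "'a \<Rightarrow> real"
    and y :: 'b
    and \<epsilon> :: real
  assumes Th_meas: "Th \<in> sets borel"
    and eps: "\<epsilon> > 0"
    and pr_meas: "pr \<in> borel_measurable borel"
    and pr_nonneg: "\<And>th. th \<in> Th \<Longrightarrow> pr th \<ge> 0"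
    and pr_int: "set_integrable lborel Th pr"
    and pr_one: "(LINT th:Th|lborel. pr th) = 1"
    and p_meas: "(\<lambda>(x, th). p x th) \<in> borel_measurable borel"
    and p_nonneg: "\<And>x th. th \<in> Th \<Longrightarrow> p x th \<ge> 0"
    and p_int: "\<And>th. th \<in> Th \<Longrightarrow> integrable lborel (\<lambda>x. p x th)"
    and p_one: "\<And>th. th \<in> Th \<Longrightarrow> (LINT x|lborel. p x th) = 1"
    and q_meas: "(\<lambda>(ths, th). q ths th) \<in> borel_measurable borel"
    and q_nonneg: "\<And>ths th. th \<in> Th \<Longrightarrow> ths \<in> Th \<Longrightarrow> q ths th \<ge> 0"
    and q_int: "\<And>th. th \<in> Th \<Longrightarrow> set_integrable lborel Th (\<lambda>ths. q ths th)"
    and q_one: "\<And>th. th \<in> Th \<Longrightarrow> (LINT ths:Th|lborel. q ths th) = 1"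
    and D_meas: "(\<lambda>x. D x y) \<in> borel_measurable borel"
    and D_nonneg: "\<And>x. D x y \<ge> 0"
    and h_meas: "h \<in> borel_measurable borel"
    and nonnull: "{th \<in> Th. h th < \<epsilon>} \<inter> {th \<in> Th. abc_marg Th pr p D y \<epsilon> th > 0} \<notin> null_sets lborel"
    and null: "{th \<in> Th. abc_marg Th pr p D y \<epsilon> th > 0} - {th \<in> Th. h th < \<epsilon>} \<in> null_sets lborel"
  shows "R_ej Th pr p q D h y \<epsilon> - R_Oej Th pr p q D y \<epsilon> \<ge>
           (LINT th:({th \<in> Th. h th < \<epsilon>} \<inter> {th \<in> Th. abc_marg Th pr p D y \<epsilon> th > 0})|lborel.
              (LINT ths:(Th - {th \<in> Th. h th < \<epsilon>})|lborel.
                 min 1 (pr ths * q th ths / (pr th * q ths th)) * q ths th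
                   * abc_marg Th pr p D y \<epsilon> th))
       \<and> (LINT th:({th \<in> Th. h th < \<epsilon>} \<inter> {th \<in> Th. abc_marg Th pr p D y \<epsilon> th > 0})|lborel.
              (LINT ths:(Th - {th \<in> Th. h th < \<epsilon>})|lborel.
                 min 1 (pr ths * q th ths / (pr th * q ths th)) * q ths th
                   * abc_marg Th pr p D y \<epsilon> th)) \<ge> 0"
proof -
  note [measurable] = Th_meas pr_meas D_meas h_meas
  have [measurable]: "(\<lambda>z. p (fst z) (snd z)) \<in> borel_measurable (borel \<Otimes>\<^sub>M (borel :: 'a measure))"
    using p_meas by (simp add: case_prod_beta' borel_prod)
  have [measurable]: "(\<lambda>z. p (snd z) (fst z)) \<in> borel_measurable (borel \<Otimes>\<^sub>M (borel :: 'b measure))"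
  proof -
    have "(\<lambda>z. p (snd z) (fst z)) = (\<lambda>(x, th). p x th) \<circ> (\<lambda>z. (snd z, fst z))" by auto
    then show ?thesis using measurable_comp[OF swapm p_meas] by simp 
  qed
  have [measurable]: "(\<lambda>z. q (fst z) (snd z)) \<in> borel_measurable (borel \<Otimes>\<^sub>M (borel :: 'a measure))"
    using q_meas by (simp add: case_prod_beta' borel_prod)
  have [measurable]: "(\<lambda>z. q (snd z) (fst z)) \<in> borel_measurable (borel \<Otimes>\<^sub>M (borel :: 'a measure))"
  proof -
    have "(\<lambda>z. q (snd z) (fst z)) = (\<lambda>(x, th). q x th) \<circ> (\<lambda>z. (snd z, fst z))" by auto
    then show ?thesis using measurable_comp[OF swapm q_meas] by simp 
  qed
  have pm[measurable (raw)]: "f \<in> measurable M borel \<Longrightarrow> g \<in> measurable M borel \<Longrightarrow> (\<lambda>w. p (f w) (g w)) \<in> borel_measurable M" for f g and M :: "'c measure"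
  proof -
    assume f: "f \<in> measurable M borel" and g: "g \<in> measurable M borel"
    have "(\<lambda>w. (f w, g w)) \<in> measurable M (borel \<Otimes>\<^sub>M borel)" using f g by (rule measurable_Pair)
    from measurable_comp[OF this p_meas[folded borel_prod]] show ?thesis by (simp add: o_def)
  qed
  have qm[measurable (raw)]: "f \<in> measurable M borel \<Longrightarrow> g \<in> measurable M borel \<Longrightarrow> (\<lambda>w. q (f w) (g w)) \<in> borel_measurable M" for f g and M :: "'c measure"
  proof -
    assume f: "f \<in> measurable M borel" and g: "g \<in> measurable M borel"
    have "(\<lambda>w. (f w, g w)) \<in> measurable M (borel \<Otimes>\<^sub>M borel)" using f g by (rule measurable_Pair)
    from measurable_comp[OF this q_meas[folded borel_prod]] show ?thesis by (simp add: o_def)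
  qed
  have A_meas[measurable]: "{th \<in> Th. h th < \<epsilon>} \<in> sets borel" by measurable
  have A_meas2[measurable]: "Th - {th \<in> Th. h th < \<epsilon>} \<in> sets borel" by measurable
  have t1: "(\<lambda>x. p x th) \<in> borel_measurable borel" for th by measurable
  have t2: "(\<lambda>ths. q ths th * q th ths) \<in> borel_measurable borel" for th by measurable
  define g where "g th = (LINT x|lborel. p x th * Kunif \<epsilon> (D x y))" for th
  have g_meas[measurable]: "g \<in> borel_measurable borel"
    unfolding g_def
    apply (subst measurable_lborel2[symmetric])
    apply (rule lborel.borel_measurable_lebesgue_integral)
    apply (simp only: lb2)
    apply (simp add: case_prod_beta)
    by measurable
  let ?K = "Kunif \<epsilon>"
  let ?Z = "abc_norm Th pr p D y \<epsilon>"
  let ?m = "abc_marg Th pr p D y \<epsilon>"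
  let ?A = "{th \<in> Th. h th < \<epsilon>}"
  let ?B = "{th \<in> Th. abc_marg Th pr p D y \<epsilon> th > 0}"
  have pr_int': "integrable lborel (\<lambda>x. indicator Th x * pr x)"
    using pr_int by (simp add: set_integrable_def)
  have q_int': "integrable lborel (\<lambda>ths. indicator Th ths * q ths th)" if "th \<in> Th" for th
    using q_int[OF that] by (simp add: set_integrable_def)
  have q_one': "(LINT ths|lborel. indicator Th ths * q ths th) = 1" if "th \<in> Th" for th
    using q_one[OF that] by (simp add: set_lebesgue_integral_def)
  have K01: "?K u = 0 \<or> ?K u = 1" for u by (auto simp: Kunif_def)
  have g_int: "integrable lborel (\<lambda>x. p x th * ?K (D x y))" if "th \<in> Th" for th
    apply (rule Bochner_Integration.integrable_bound[OF p_int[OF that]])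
    using t1 apply simp
    using p_nonneg[OF that] by (auto simp: Kunif_def)
  have g_bnd: "0 \<le> g th \<and> g th \<le> 1" if "th \<in> Th" for th
  proof
    show "0 \<le> g th" unfolding g_def
      using p_nonneg[OF that] by (intro integral_nonneg_AE) (auto simp: Kunif_def)
    have "g th \<le> (LINT x|lborel. p x th)" unfolding g_def
      using p_nonneg[OF that] by (intro integral_mono g_int that p_int) (auto simp: Kunif_def)
    then show "g th \<le> 1" using p_one[OF that] by simp
  qed
  have marg_eq: "?m th = indicator Th th * pr th * g th / ?Z" for th
  proof -
    have "(\<lambda>x. indicator Th th * pr th * p x th * ?K (D x y) / ?Z) =
          (\<lambda>x. (indicator Th th * pr th / ?Z) * (p x th * ?K (D x y)))"
      by (rule ext) (simp add: divide_inverse ac_simps)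
    then show ?thesis unfolding abc_marg_def abc_joint_def g_def by simp
  qed
  have Z_eq: "?Z = (LINT th|lborel. indicator Th th * (pr th * g th))"
  proof -
    have "(LINT x|lborel. pr th * p x th * ?K (D x y)) = pr th * g th" for th
      unfolding g_def by (simp add: mult.assoc)
    then show ?thesis unfolding abc_norm_def set_lebesgue_integral_def by simp
  qed
  have Zh_eq: "ej_norm Th pr p D h y \<epsilon> = (LINT th|lborel. indicator Th th * (pr th * g th * ?K (h th)))"
  proof -
    have "(LINT x|lborel. pr th * p x th * min (?K (D x y)) (?K (h th))) = pr th * g th * ?K (h th)" for th
    proof -
      have "(\<lambda>x. pr th * p x th * min (?K (D x y)) (?K (h th))) = (\<lambda>x. (pr th * ?K (h th)) * (p x th * ?K (D x y)))"
        by (rule ext) (simp add: Kunif_min ac_simps)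
      then show ?thesis unfolding g_def by simp
    qed
    then show ?thesis unfolding ej_norm_def set_lebesgue_integral_def by simp
  qed
  have Z_nonneg: "?Z \<ge> 0"
    unfolding Z_eq using g_bnd pr_nonneg
    by (intro integral_nonneg_AE) (auto simp: indicator_def)
  have Z_pos: "?Z > 0"
  proof (rule ccontr)
    assume "\<not> ?Z > 0"
    then have "?Z = 0" using Z_nonneg by simp
    then have "?B = {}" by (simp add: marg_eq)
    then have e: "?A \<inter> ?B = {}" by blast
    show False using nonnull unfolding e by simp
  qed
  have m_nonneg: "?m th \<ge> 0" for th
    using g_bnd pr_nonneg Z_pos by (auto simp: marg_eq indicator_def)
  have m_out: "th \<notin> Th \<Longrightarrow> ?m th = 0" for th by (simp add: marg_eq)
  have m_meas[measurable]: "?m \<in> borel_measurable borel"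
    unfolding marg_eq by measurable
  have m_int: "integrable lborel ?m"
  proof (rule Bochner_Integration.integrable_bound)
    show "integrable lborel (\<lambda>x. indicator Th x * pr x / ?Z)" using pr_int' by simp
    show "?m \<in> borel_measurable lborel" by simp
    show "AE x in lborel. norm (?m x) \<le> norm (indicator Th x * pr x / ?Z)"
      using g_bnd pr_nonneg Z_pos
      by (auto simp: marg_eq indicator_def divide_right_mono mult_left_le)
  qed
  have Zh: "ej_norm Th pr p D h y \<epsilon> = ?Z"
  proof -
    have "(LINT th|lborel. indicator Th th * (pr th * g th * ?K (h th))) = (LINT th|lborel. indicator Th th * (pr th * g th))"
    proof (rule integral_cong_AE)
      show "(\<lambda>th. indicator Th th * (pr th * g th * ?K (h th))) \<in> borel_measurable lborel" by simp
      show "(\<lambda>th. indicator Th th * (pr th * g th)) \<in> borel_measurable lborel" by simp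
      show "AE th in lborel. indicator Th th * (pr th * g th * ?K (h th)) = indicator Th th * (pr th * g th)"
        using AE_not_in[OF null]
      proof (rule AE_mp, intro AE_I2 impI)
        fix th assume nt: "th \<notin> ?B - ?A"
        show "indicator Th th * (pr th * g th * ?K (h th)) = indicator Th th * (pr th * g th)"
        proof (cases "th \<in> Th \<and> h th \<ge> \<epsilon>")
          case True
          then have "\<not> ?m th > 0" using nt by auto
          then have "pr th * g th / ?Z \<le> 0" using True by (simp add: marg_eq)
          then have "pr th * g th \<le> 0" using Z_pos by (simp add: divide_le_0_iff)
          moreover have "pr th * g th \<ge> 0" using True g_bnd pr_nonneg by simp
          ultimately show ?thesis by simp
        next
          case False
          then show ?thesis by (auto simp: Kunif_def indicator_def)
        qed
      qed
    qed
    then show ?thesis using Zh_eq Z_eq by simp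
  qed
  have ejj: "ej_joint Th pr p D h y \<epsilon> th x = abc_joint Th pr p D y \<epsilon> th x * ?K (h th)" for th x
    unfolding ej_joint_def abc_joint_def Zh Kunif_min by simp
  have jnz: "th \<in> Th \<and> ?K (D x y) = 1" if "abc_joint Th pr p D y \<epsilon> th x \<noteq> 0" for th x
    using that K01[of "D x y"] by (auto simp: abc_joint_def indicator_def)
  have inner_O: "(LINT x|lborel. min 1 (alpha_breve pr q D y \<epsilon> th x ths) * q ths th * abc_joint Th pr p D y \<epsilon> th x)
     = min 1 (pr ths * q th ths / (pr th * q ths th)) * q ths th * ?m th" for th ths
  proof -
    have "(\<lambda>x. min 1 (alpha_breve pr q D y \<epsilon> th x ths) * q ths th * abc_joint Th pr p D y \<epsilon> th x)
      = (\<lambda>x. (min 1 (pr ths * q th ths / (pr th * q ths th)) * q ths th) * abc_joint Th pr p D y \<epsilon> th x)"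
    proof
      fix x show "min 1 (alpha_breve pr q D y \<epsilon> th x ths) * q ths th * abc_joint Th pr p D y \<epsilon> th x
        = (min 1 (pr ths * q th ths / (pr th * q ths th)) * q ths th) * abc_joint Th pr p D y \<epsilon> th x"
        using jnz[of th x] by (cases "abc_joint Th pr p D y \<epsilon> th x = 0") (auto simp: alpha_breve_def)
    qed
    then show ?thesis unfolding abc_marg_def by simp
  qed
  have inner_E: "(LINT x|lborel. min 1 (alpha_tilde pr q D h y \<epsilon> th x ths) * q ths th * ej_joint Th pr p D h y \<epsilon> th x)
     = min 1 (pr ths * q th ths / (pr th * q ths th) * ?K (h ths)) * q ths th * ?K (h th) * ?m th" for th ths
  proof -
    have "(\<lambda>x. min 1 (alpha_tilde pr q D h y \<epsilon> th x ths) * q ths th * ej_joint Th pr p D h y \<epsilon> th x)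
      = (\<lambda>x. (min 1 (pr ths * q th ths / (pr th * q ths th) * ?K (h ths)) * q ths th * ?K (h th)) * abc_joint Th pr p D y \<epsilon> th x)"
    proof
      fix x show "min 1 (alpha_tilde pr q D h y \<epsilon> th x ths) * q ths th * ej_joint Th pr p D h y \<epsilon> th x
        = (min 1 (pr ths * q th ths / (pr th * q ths th) * ?K (h ths)) * q ths th * ?K (h th)) * abc_joint Th pr p D y \<epsilon> th x"
        using jnz[of th x] K01[of "h th"]
        by (cases "abc_joint Th pr p D y \<epsilon> th x = 0") (auto simp: alpha_tilde_def ejj)
    qed
    then show ?thesis unfolding abc_marg_def by simp
  qed
  define Jf where "Jf S th = (LINT ths|lborel. indicator S ths * (min 1 (pr ths * q th ths / (pr th * q ths th)) * q ths th))" for S th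
  have Jint: "integrable lborel (\<lambda>ths. indicator S ths * (min 1 (pr ths * q th ths / (pr th * q ths th)) * q ths th))"
    if "th \<in> Th" "S \<subseteq> Th" "S \<in> sets borel" for S th
  proof (rule Bochner_Integration.integrable_bound[OF q_int'[OF that(1)]])
    show "(\<lambda>ths. indicator S ths * (min 1 (pr ths * q th ths / (pr th * q ths th)) * q ths th)) \<in> borel_measurable lborel"
      using that(3) by simp
    show "AE ths in lborel. norm (indicator S ths * (min 1 (pr ths * q th ths / (pr th * q ths th)) * q ths th))
         \<le> norm (indicator Th ths * q ths th)"
    proof (intro AE_I2)
      fix ths
      show "norm (indicator S ths * (min 1 (pr ths * q th ths / (pr th * q ths th)) * q ths th))
         \<le> norm (indicator Th ths * q ths th)"
      proof (cases "ths \<in> S")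
        case True
        then have ths: "ths \<in> Th" using that by auto
        have "0 \<le> pr ths * q th ths / (pr th * q ths th)"
          using pr_nonneg q_nonneg ths that(1) by simp
        moreover have "min 1 (pr ths * q th ths / (pr th * q ths th)) * q ths th \<le> 1 * q ths th"
          using q_nonneg[OF that(1) ths] by (intro mult_right_mono) auto
        ultimately show ?thesis using True ths q_nonneg[OF that(1) ths] by (auto simp: abs_mult)
      next
        case False then show ?thesis by simp
      qed
    qed
  qed
  have Jbnd: "0 \<le> Jf S th \<and> Jf S th \<le> 1"
    if "th \<in> Th" "S \<subseteq> Th" "S \<in> sets borel" for S th
  proof
    have nn: "0 \<le> indicator S ths * (min 1 (pr ths * q th ths / (pr th * q ths th)) * q ths th)" for ths
    proof (cases "ths \<in> S")
      case True
      then have ths: "ths \<in> Th" using that by auto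
      have "0 \<le> pr ths * q th ths / (pr th * q ths th)"
        using pr_nonneg q_nonneg ths that(1) by simp
      then show ?thesis using True ths q_nonneg[OF that(1) ths] by auto
    qed simp
    show "0 \<le> Jf S th" unfolding Jf_def using nn by (intro integral_nonneg_AE) auto
    have "Jf S th \<le> (LINT ths|lborel. indicator Th ths * q ths th)" unfolding Jf_def
    proof (intro integral_mono Jint that q_int')
      fix ths
      show "indicator S ths * (min 1 (pr ths * q th ths / (pr th * q ths th)) * q ths th) \<le> indicator Th ths * q ths th"
      proof (cases "ths \<in> S")
        case True
        then have ths: "ths \<in> Th" using that by auto
        have "min 1 (pr ths * q th ths / (pr th * q ths th)) * q ths th \<le> 1 * q ths th"
          using q_nonneg[OF that(1) ths] by (intro mult_right_mono) auto
        then show ?thesis using True ths by simp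
      qed (use q_nonneg[OF that(1)] in \<open>auto simp: indicator_def\<close>)
    qed
    then show "Jf S th \<le> 1" using q_one'[OF that(1)] by simp
  qed
  have Jsplit: "Jf Th th = Jf ?A th + Jf (Th - ?A) th" if "th \<in> Th" for th
  proof -
    have "Jf ?A th + Jf (Th - ?A) th = (LINT ths|lborel. indicator ?A ths * (min 1 (pr ths * q th ths / (pr th * q ths th)) * q ths th)
        + indicator (Th - ?A) ths * (min 1 (pr ths * q th ths / (pr th * q ths th)) * q ths th))"
      unfolding Jf_def by (rule Bochner_Integration.integral_add[symmetric]; rule Jint[OF that]) auto
    also have "\<dots> = Jf Th th" unfolding Jf_def
      by (rule Bochner_Integration.integral_cong) (auto simp: indicator_def)
    finally show ?thesis by simp
  qed
  have Jmeas[measurable]: "Jf S \<in> borel_measurable borel" if [measurable]: "S \<in> sets borel" for S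
    unfolding Jf_def
    apply (subst measurable_lborel2[symmetric])
    apply (rule lborel.borel_measurable_lebesgue_integral)
    apply (simp only: lb2)
    apply (simp add: case_prod_beta)
    by measurable
  have mid_O: "(LINT ths:Th|lborel. min 1 (pr ths * q th ths / (pr th * q ths th)) * q ths th * ?m th) = ?m th * Jf Th th" for th
  proof -
    have "(\<lambda>ths. indicator Th ths *\<^sub>R (min 1 (pr ths * q th ths / (pr th * q ths th)) * q ths th * ?m th))
      = (\<lambda>ths. ?m th * (indicator Th ths * (min 1 (pr ths * q th ths / (pr th * q ths th)) * q ths th)))"
      by (rule ext) (simp add: ac_simps)
    then show ?thesis unfolding set_lebesgue_integral_def Jf_def by simp
  qed
  have mid_R: "(LINT ths:(Th - ?A)|lborel. min 1 (pr ths * q th ths / (pr th * q ths th)) * q ths th * ?m th) = ?m th * Jf (Th - ?A) th" for th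
  proof -
    have "(\<lambda>ths. indicator (Th - ?A) ths *\<^sub>R (min 1 (pr ths * q th ths / (pr th * q ths th)) * q ths th * ?m th))
      = (\<lambda>ths. ?m th * (indicator (Th - ?A) ths * (min 1 (pr ths * q th ths / (pr th * q ths th)) * q ths th)))"
      by (rule ext) (simp add: ac_simps)
    then show ?thesis unfolding set_lebesgue_integral_def Jf_def by simp
  qed
  have mid_E: "(LINT ths:Th|lborel. min 1 (pr ths * q th ths / (pr th * q ths th) * ?K (h ths)) * q ths th * ?K (h th) * ?m th)
     = ?K (h th) * ?m th * Jf ?A th" for th
  proof -
    have "(\<lambda>ths. indicator Th ths *\<^sub>R (min 1 (pr ths * q th ths / (pr th * q ths th) * ?K (h ths)) * q ths th * ?K (h th) * ?m th))
      = (\<lambda>ths. (?K (h th) * ?m th) * (indicator ?A ths * (min 1 (pr ths * q th ths / (pr th * q ths th)) * q ths th)))"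
      by (rule ext) (auto simp: indicator_def Kunif_def)
    then show ?thesis unfolding set_lebesgue_integral_def Jf_def by simp
  qed
  let ?fO = "\<lambda>th. indicator Th th * (?m th * Jf Th th)"
  let ?fE = "\<lambda>th. indicator Th th * (?K (h th) * ?m th * Jf ?A th)"
  let ?fR = "\<lambda>th. indicator (?A \<inter> ?B) th * (?m th * Jf (Th - ?A) th)"
  have I_O: "(LINT th:Th|lborel. (LINT ths:Th|lborel. (LINT x|lborel.
      min 1 (alpha_breve pr q D y \<epsilon> th x ths) * q ths th * abc_joint Th pr p D y \<epsilon> th x))) = integral\<^sup>L lborel ?fO"
    by (simp only: inner_O mid_O) (simp add: set_lebesgue_integral_def)
  have I_E: "(LINT th:Th|lborel. (LINT ths:Th|lborel. (LINT x|lborel.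
      min 1 (alpha_tilde pr q D h y \<epsilon> th x ths) * q ths th * ej_joint Th pr p D h y \<epsilon> th x))) = integral\<^sup>L lborel ?fE"
    by (simp only: inner_E mid_E) (simp add: set_lebesgue_integral_def)
  have I_R: "(LINT th:(?A \<inter> ?B)|lborel.
              (LINT ths:(Th - ?A)|lborel.
                 min 1 (pr ths * q th ths / (pr th * q ths th)) * q ths th * ?m th)) = integral\<^sup>L lborel ?fR"
    by (simp only: mid_R) (simp add: set_lebesgue_integral_def)
  have bnd: "\<bar>indicator T th * (c * ?m th * Jf S th)\<bar> \<le> ?m th"
    if "T \<subseteq> Th" "S \<subseteq> Th" "S \<in> sets borel" "0 \<le> c" "c \<le> 1" for T S th c
  proof (cases "th \<in> T")
    case True
    then have th: "th \<in> Th" using that by auto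
    have "c * ?m th * Jf S th \<le> 1 * ?m th * 1"
      using Jbnd[OF th that(2,3)] m_nonneg[of th] that(4,5)
      by (intro mult_mono) (auto intro: mult_right_mono)
    moreover have "0 \<le> c * ?m th * Jf S th" using Jbnd[OF th that(2,3)] m_nonneg[of th] that(4,5) by simp
    ultimately show ?thesis using True by simp
  qed (simp add: m_nonneg)
  have int_gen: "integrable lborel (\<lambda>th. indicator T th * (c th * ?m th * Jf S th))"
    if "T \<subseteq> Th" "S \<subseteq> Th" "S \<in> sets borel" "T \<in> sets borel" "\<And>th. 0 \<le> c th \<and> c th \<le> 1"
       "c \<in> borel_measurable borel" for T S c
  proof (rule Bochner_Integration.integrable_bound[OF m_int])
    show "(\<lambda>th. indicator T th * (c th * ?m th * Jf S th)) \<in> borel_measurable lborel"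
      using that(3,4,6) by simp
    show "AE x in lborel. norm (indicator T x * (c x * ?m x * Jf S x)) \<le> norm (?m x)"
      using bnd[OF that(1,2,3)] that(5) m_nonneg by auto
  qed
  have B_meas[measurable]: "?B \<in> sets borel" by measurable
  have iO: "integrable lborel ?fO" using int_gen[of Th Th "\<lambda>_. 1"] by simp
  have iE: "integrable lborel ?fE" using int_gen[of Th ?A "\<lambda>th. ?K (h th)"] by (simp add: Kunif_def ac_simps)
  have iR: "integrable lborel ?fR" using int_gen[of "?A \<inter> ?B" "Th - ?A" "\<lambda>_. 1"] by (auto simp: Int_assoc)
  have ptw: "?fR th \<le> ?fO th - ?fE th" for th
  proof (cases "th \<in> Th")
    case th: True
    have J: "0 \<le> Jf ?A th" "0 \<le> Jf (Th - ?A) th" "0 \<le> Jf Th th" using Jbnd[OF th] by auto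
    show ?thesis
    proof (cases "h th < \<epsilon>")
      case True
      then have "?fO th - ?fE th = ?m th * Jf (Th - ?A) th"
        using th Jsplit[OF th] by (simp add: Kunif_def algebra_simps)
      moreover have "?fR th \<le> ?m th * Jf (Th - ?A) th"
        using J m_nonneg[of th] by (auto simp: indicator_def)
      ultimately show ?thesis by simp
    next
      case False
      then show ?thesis using th J m_nonneg[of th] by (auto simp: Kunif_def indicator_def)
    qed
  next
    case False then show ?thesis by (simp add: indicator_def)
  qed
  have main: "integral\<^sup>L lborel ?fR \<le> integral\<^sup>L lborel ?fO - integral\<^sup>L lborel ?fE"
  proof -
    have "integral\<^sup>L lborel ?fR \<le> (LINT th|lborel. ?fO th - ?fE th)"
      by (rule integral_mono[OF iR _ ptw]) (use iO iE in auto)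
    also have "\<dots> = integral\<^sup>L lborel ?fO - integral\<^sup>L lborel ?fE"
      by (rule Bochner_Integration.integral_diff[OF iO iE])
    finally show ?thesis .
  qed
  have nnR: "0 \<le> integral\<^sup>L lborel ?fR"
    using Jbnd m_nonneg by (intro integral_nonneg_AE AE_I2) (auto simp: indicator_def)
  show ?thesis
    unfolding R_ej_def R_Oej_def I_O I_E I_R using main nnR by simp
qed
end
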